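(* Let $n\ge4$ be a power of $2$. Then $\mathcal{B}^{(n)}\subseteq\mathcal{M}^{(b,n)}$ for every integer $b\in(1,n)$ dividing $n$. When $n\ge512$ the inclusion is strict.
   Context: Matrices over $\mathbb{F}\in\{\mathbb{R},\mathbb{C}\}$. For $d$ dividing $n$: $\mathcal{B}\mathcal{D}^{(d,n)}$ is the class of $n\times n$ block-diagonal matrices with $n/d$ arbitrary diagonal blocks of size $d\times d$; $\mathcal{D}\mathcal{B}^{(d,n)}$ is the class of $n\times n$ matrices which, partitioned into an $(n/d)\times(n/d)$ grid of $d\times d$ blocks, have every block diagonal. The Monarch class $\mathcal{M}^{(b,n)}$ is the set of products $\mathbf{L}\mathbf{R}$ with $\mathbf{L}\in\mathcal{D}\mathcal{B}^{(b,n)}$ and $\mathbf{R}\in\mathcal{B}\mathcal{D}^{(b,n)}$. For $k\in\{2,4,\dots,n\}$ a power of 2, a butterfly factor matrix in $\mathcal{B}\mathcal{F}^{(n,k)}$ is an $n\times n$ block-diagonal matrix with $n/k$ diagonal blocks, each a $k\times k$ butterfly factor $\begin{bmatrix}\mathbf{D}_1&\mathbf{D}_2\\\mathbf{D}_3&\mathbf{D}_4\end{bmatrix}$ with $\mathbf{D}_1,\dots,\mathbf{D}_4$ arbitrary $(k/2)\times(k/2)$ diagonal matrices. The butterfly class $\mathcal{B}^{(n)}$ consists of all products $\mathbf{B}_n\mathbf{B}_{n/2}\cdots\mathbf{B}_2$ with $\mathbf{B}_k\in\mathcal{B}\mathcal{F}^{(n,k)}$. *)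

theory Defs
  imports "Jordan_Normal_Form.Matrix"
begin

definition BD :: "nat \<Rightarrow> nat \<Rightarrow> 'a::field mat set" where
  "BD d n = {A \<in> carrier_mat n n. \<forall>i<n. \<forall>j<n. i div d \<noteq> j div d \<longrightarrow> A $$ (i, j) = 0}"

text \<open>(n/d) x (n/d) grid of d x d blocks, every block diagonal.\<close>
definition DB :: "nat \<Rightarrow> nat \<Rightarrow> 'a::field mat set" where
  "DB d n = {A \<in> carrier_mat n n. \<forall>i<n. \<forall>j<n. i mod d \<noteq> j mod d \<longrightarrow> A $$ (i, j) = 0}"

definition Monarch :: "nat \<Rightarrow> nat \<Rightarrow> 'a::field mat set" where
  "Monarch b n = {L * R | L R. L \<in> DB b n \<and> R \<in> BD b n}"

text \<open>Butterfly factor matrices: block diagonal with n/k blocks of size k x k, each block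
  of the form [D1 D2; D3 D4] with (k/2) x (k/2) diagonal D_i, i.e. inside a block the
  entry (r,s) may be nonzero only if r = s mod k/2.\<close>
definition BF :: "nat \<Rightarrow> nat \<Rightarrow> 'a::field mat set" where
  "BF n k = {A \<in> carrier_mat n n. \<forall>i<n. \<forall>j<n.
      (i div k \<noteq> j div k \<or> (i mod k) mod (k div 2) \<noteq> (j mod k) mod (k div 2)) \<longrightarrow> A $$ (i, j) = 0}"

text \<open>Butterfly class: products B_n B_{n/2} ... B_2, B_k in BF n k. The list Bs is
  [B_n, B_{n/2}, ..., B_2] (entry t has k = n / 2^t), and 2^(length Bs) = n.\<close>
definition Butterfly :: "nat \<Rightarrow> 'a::field mat set" where
  "Butterfly n = {foldr (*) Bs (1\<^sub>m n) | Bs. 2 ^ length Bs = n \<and>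
      (\<forall>t<length Bs. Bs ! t \<in> BF n (n div 2 ^ t))}"

end

theory Submission
  imports Defs "HOL-Computational_Algebra.Primes"
begin

lemma DB_carrier: "A \<in> DB b n \<Longrightarrow> A \<in> carrier_mat n n" by (simp add: DB_def)
lemma BD_carrier: "A \<in> BD b n \<Longrightarrow> A \<in> carrier_mat n n" by (simp add: BD_def)

lemma one_DB: "(1\<^sub>m n :: 'a::field mat) \<in> DB b n" by (auto simp: DB_def)
lemma one_BD: "(1\<^sub>m n :: 'a::field mat) \<in> BD b n" by (auto simp: BD_def)

lemma DB_mult:
  assumes "(A::'a::field mat) \<in> DB b n" "B \<in> DB b n" shows "A * B \<in> DB b n"
proof -
  have A: "A \<in> carrier_mat n n" and B: "B \<in> carrier_mat n n" using assms by (auto simp: DB_def)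
  { fix i j assume ij: "i < n" "j < n" "i mod b \<noteq> j mod b"
    have "(A * B) $$ (i, j) = (\<Sum>k\<in>{0..<n}. A $$ (i,k) * B $$ (k,j))"
      using A B ij by (simp add: scalar_prod_def)
    also have "\<dots> = 0"
    proof (rule sum.neutral, intro ballI)
      fix k assume "k \<in> {0..<n}"
      then show "A $$ (i,k) * B $$ (k,j) = 0"
        using assms ij by (cases "i mod b = k mod b") (auto simp: DB_def)
    qed
    finally have "(A * B) $$ (i, j) = 0" . }
  then show ?thesis using A B by (auto simp: DB_def)
qed

lemma BD_mult:
  assumes "(A::'a::field mat) \<in> BD b n" "B \<in> BD b n" shows "A * B \<in> BD b n"
proof -
  have A: "A \<in> carrier_mat n n" and B: "B \<in> carrier_mat n n" using assms by (auto simp: BD_def)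
  { fix i j assume ij: "i < n" "j < n" "i div b \<noteq> j div b"
    have "(A * B) $$ (i, j) = (\<Sum>k\<in>{0..<n}. A $$ (i,k) * B $$ (k,j))"
      using A B ij by (simp add: scalar_prod_def)
    also have "\<dots> = 0"
    proof (rule sum.neutral, intro ballI)
      fix k assume "k \<in> {0..<n}"
      then show "A $$ (i,k) * B $$ (k,j) = 0"
        using assms ij by (cases "i div b = k div b") (auto simp: BD_def)
    qed
    finally have "(A * B) $$ (i, j) = 0" . }
  then show ?thesis using A B by (auto simp: BD_def)
qed

lemma foldr_closed:
  assumes "(1\<^sub>m n :: 'a::field mat) \<in> S" "\<And>A B. A \<in> S \<Longrightarrow> B \<in> S \<Longrightarrow> A * B \<in> S"
    "\<forall>x\<in>set xs. x \<in> S"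
  shows "foldr (*) xs (1\<^sub>m n) \<in> S"
  using assms(3) by (induction xs) (auto intro: assms(1,2))

lemma foldr_mult_carrier:
  assumes "\<forall>x\<in>set xs. (x::'a::field mat) \<in> carrier_mat n n" "X \<in> carrier_mat n n"
  shows "foldr (*) xs X = foldr (*) xs (1\<^sub>m n) * X \<and> foldr (*) xs (1\<^sub>m n) \<in> carrier_mat n n"
  using assms
proof (induction xs)
  case Nil then show ?case by simp
next
  case (Cons a xs)
  then have a: "a \<in> carrier_mat n n" and IH: "foldr (*) xs X = foldr (*) xs (1\<^sub>m n) * X"
    and C: "foldr (*) xs (1\<^sub>m n) \<in> carrier_mat n n" by auto
  show ?case using a IH C Cons.prems(2) by simp
qed

lemma BF_DB:
  assumes "c < e" shows "BF n (2^e) \<subseteq> (DB (2^c) n :: 'a::field mat set)"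
proof
  fix A :: "'a mat" assume A: "A \<in> BF n (2^e)"
  have e: "(2::nat)^e div 2 = 2^(e-1)" using assms by (cases e) auto
  have key: "x mod 2^e mod 2^(e-1) mod 2^c = x mod 2^c" for x :: nat
  proof -
    have "x mod 2^e mod 2^(e-1) = x mod 2^(e-1)"
      by (rule mod_mod_cancel) (simp add: le_imp_power_dvd)
    moreover have "x mod 2^(e-1) mod 2^c = x mod 2^c"
      by (rule mod_mod_cancel) (use assms in \<open>simp add: le_imp_power_dvd\<close>)
    ultimately show ?thesis by simp
  qed
  have AB: "A \<in> carrier_mat n n" and AZ: "\<And>i j. i < n \<Longrightarrow> j < n \<Longrightarrow>
      i mod 2^e mod 2^(e-1) \<noteq> j mod 2^e mod 2^(e-1) \<Longrightarrow> A $$ (i,j) = 0"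
    using A unfolding BF_def e by auto
  { fix i j assume ij: "i < n" "j < n" "i mod 2^c \<noteq> j mod 2^c"
    then have "i mod 2^e mod 2^(e-1) \<noteq> j mod 2^e mod 2^(e-1)" using key[of i] key[of j] by metis
    then have "A $$ (i,j) = 0" using AZ ij by blast }
  then show "A \<in> DB (2^c) n" using AB unfolding DB_def by blast
qed

lemma BF_BD:
  assumes "e \<le> c" shows "BF n (2^e) \<subseteq> (BD (2^c) n :: 'a::field mat set)"
proof
  fix A :: "'a mat" assume A: "A \<in> BF n (2^e)"
  have key: "x div 2^c = x div 2^e div 2^(c-e)" for x :: nat
  proof -
    have "(2::nat)^c = 2^e * 2^(c-e)" using assms by (simp add: power_add[symmetric])
    then show ?thesis by (simp add: div_mult2_eq)
  qed
  have AB: "A \<in> carrier_mat n n" and AZ: "\<And>i j. i < n \<Longrightarrow> j < n \<Longrightarrow>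
      i div 2^e \<noteq> j div 2^e \<Longrightarrow> A $$ (i,j) = 0"
    using A unfolding BF_def by auto
  { fix i j assume ij: "i < n" "j < n" "i div 2^c \<noteq> j div 2^c"
    then have "i div 2^e \<noteq> j div 2^e" using key[of i] key[of j] by metis
    then have "A $$ (i,j) = 0" using AZ ij by blast }
  then show "A \<in> BD (2^c) n" using AB unfolding BD_def by blast
qed

lemma butterfly_sub:
  assumes n: "n = 2^m" and "0 < c" "c < m"
  shows "(Butterfly n :: 'a::field mat set) \<subseteq> Monarch (2^c) n"
proof
  fix B :: "'a mat" assume "B \<in> Butterfly n"
  then obtain Bs where B: "B = foldr (*) Bs (1\<^sub>m n)" and len: "2 ^ length Bs = n"
    and F: "\<forall>t<length Bs. Bs ! t \<in> BF n (n div 2 ^ t)" by (auto simp: Butterfly_def)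
  have lm: "length Bs = m" using len n by simp
  have F2: "Bs ! t \<in> BF n (2^(m-t))" if "t < m" for t
    using F that lm n by (simp add: power_diff)
  define p where "p = m - c"
  have xs: "\<forall>x\<in>set (take p Bs). x \<in> DB (2^c) n"
  proof
    fix x assume "x \<in> set (take p Bs)"
    then obtain t where t: "t < length (take p Bs)" "x = take p Bs ! t" by (auto simp: in_set_conv_nth)
    then have "t < p" "t < m" using lm by auto
    then have "c < m - t" using p_def by simp
    then show "x \<in> DB (2^c) n" using t F2[of t] BF_DB[of c "m-t" n] \<open>t < m\<close> by auto
  qed
  have ys: "\<forall>x\<in>set (drop p Bs). x \<in> BD (2^c) n"
  proof
    fix x assume "x \<in> set (drop p Bs)"
    then obtain t where t: "t < length (drop p Bs)" "x = drop p Bs ! t" by (auto simp: in_set_conv_nth)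
    then have "p + t < m" using lm by auto
    moreover have "m - (p + t) \<le> c" using p_def by simp
    ultimately show "x \<in> BD (2^c) n" using t F2[of "p+t"] BF_BD[of "m-(p+t)" c n] by auto
  qed
  have cx: "\<forall>x\<in>set (take p Bs). x \<in> carrier_mat n n" using xs DB_carrier by blast
  have cy: "\<forall>x\<in>set (drop p Bs). x \<in> carrier_mat n n" using ys BD_carrier by blast
  have L: "foldr (*) (take p Bs) (1\<^sub>m n) \<in> DB (2^c) n"
    by (rule foldr_closed[OF one_DB DB_mult xs])
  have R: "foldr (*) (drop p Bs) (1\<^sub>m n) \<in> BD (2^c) n"
    by (rule foldr_closed[OF one_BD BD_mult ys])
  have "B = foldr (*) (take p Bs) (foldr (*) (drop p Bs) (1\<^sub>m n))"
    unfolding B by (metis append_take_drop_id foldr_append)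
  also have "\<dots> = foldr (*) (take p Bs) (1\<^sub>m n) * foldr (*) (drop p Bs) (1\<^sub>m n)"
    using foldr_mult_carrier[OF cx BD_carrier[OF R]] by blast
  finally show "B \<in> Monarch (2^c) n" using L R by (auto simp: Monarch_def)
qed

lemma monarch_entry:
  assumes "(L::'a::field mat) \<in> DB b n" "R \<in> BD b n" "i < n" "j < n" "i mod b = 0" "j < b"
  shows "(L * R) $$ (i, j) = L $$ (i, 0) * R $$ (0, j)"
proof -
  have Lc: "L \<in> carrier_mat n n" and Rc: "R \<in> carrier_mat n n" using assms by (auto simp: DB_def BD_def)
  have n0: "0 < n" using assms by auto
  have "(L * R) $$ (i, j) = (\<Sum>k\<in>{0..<n}. L $$ (i,k) * R $$ (k,j))"
    using Lc Rc assms by (simp add: scalar_prod_def)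
  also have "\<dots> = L $$ (i,0) * R $$ (0,j) + (\<Sum>k\<in>{0..<n} - {0}. L $$ (i,k) * R $$ (k,j))"
    using n0 by (subst sum.remove[of _ 0]) auto
  also have "(\<Sum>k\<in>{0..<n} - {0}. L $$ (i,k) * R $$ (k,j)) = 0"
  proof (rule sum.neutral, intro ballI)
    fix k assume k: "k \<in> {0..<n} - {0}"
    show "L $$ (i,k) * R $$ (k,j) = 0"
    proof (cases "k mod b = 0")
      case True
      then have "k div b \<noteq> 0" using k by auto
      moreover have "j div b = 0" using assms by simp
      ultimately show ?thesis using assms k by (auto simp: BD_def)
    next
      case False then show ?thesis using assms k by (auto simp: DB_def)
    qed
  qed
  finally show ?thesis by simp
qed

lemma monarch_minor:
  assumes "(M::'a::field mat) \<in> Monarch b n" "b < n" "j < b"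
  shows "M $$ (0,0) * M $$ (b,j) = M $$ (0,j) * M $$ (b,0)"
proof -
  obtain L R where M: "M = L * R" "L \<in> DB b n" "R \<in> BD b n" using assms by (auto simp: Monarch_def)
  have "0 < b" using assms by auto
  then show ?thesis using M monarch_entry[OF M(2,3)] assms by (simp add: algebra_simps)
qed

lemma strict:
  assumes n: "n = 2^m" and "0 < c" "c < m" "8 \<le> n"
  shows "(Butterfly n :: 'a::field mat set) \<subset> Monarch (2^c) n"
proof -
  have sub: "(Butterfly n :: 'a mat set) \<subseteq> Monarch (2^c) n" using butterfly_sub assms by blast
  have m3: "3 \<le> m"
  proof (rule ccontr)
    assume "\<not> 3 \<le> m" then have "m \<le> 2" by simp
    then have "n \<le> 2^2" unfolding n by (rule power_increasing) simp
    then show False using assms by simp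
  qed
  show ?thesis
  proof (cases "c = 1")
    case True
    define W :: "'a mat" where "W = mat n n (\<lambda>(i,j). if (i,j) = (0,0) \<or> (i,j) = (4,2) then 1 else 0)"
    have WD: "W \<in> DB 2 n" by (auto simp: W_def DB_def)
    have "W = W * 1\<^sub>m n" using WD DB_carrier by (metis right_mult_one_mat)
    then have WM: "W \<in> Monarch (2^c) n" using WD one_BD True unfolding Monarch_def by auto
    have "(Butterfly n :: 'a mat set) \<subseteq> Monarch (2^2) n" using butterfly_sub[of n m 2] assms m3 by auto
    moreover have "W \<notin> Monarch 4 n"
    proof
      assume "W \<in> Monarch 4 n"
      from monarch_minor[OF this, of 2] assms show False by (auto simp: W_def)
    qed
    ultimately have "W \<notin> Butterfly n" by auto
    then show ?thesis using sub WM by auto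
  next
    case False
    then have c2: "2 \<le> c" using assms by simp
    have b4: "(4::nat) \<le> 2^c" using power_increasing[OF c2, of "2::nat"] by simp
    define W :: "'a mat" where "W = mat n n (\<lambda>(i,j). if (i,j) = (0,0) \<or> (i,j) = (2,1) then 1 else 0)"
    have WD: "W \<in> BD (2^c) n" using b4 by (auto simp: W_def BD_def div_eq_0_iff)
    have "W = 1\<^sub>m n * W" using WD BD_carrier by (metis left_mult_one_mat)
    then have WM: "W \<in> Monarch (2^c) n" using WD one_DB unfolding Monarch_def by auto
    have "(Butterfly n :: 'a mat set) \<subseteq> Monarch (2^1) n" using butterfly_sub[of n m 1] assms by auto
    moreover have "W \<notin> Monarch 2 n"
    proof
      assume "W \<in> Monarch 2 n"
      from monarch_minor[OF this, of 1] assms show False by (auto simp: W_def)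
    qed
    ultimately have "W \<notin> Butterfly n" by auto
    then show ?thesis using sub WM by auto
  qed
qed

theorem theoremC15:
  fixes n b :: nat
  assumes "\<exists>m. n = 2 ^ m" and "n \<ge> 4"
    and "1 < b" and "b < n" and "b dvd n"
  shows "(Butterfly n :: real mat set) \<subseteq> Monarch b n
       \<and> (n \<ge> 512 \<longrightarrow> (Butterfly n :: real mat set) \<subset> Monarch b n)
       \<and> (Butterfly n :: complex mat set) \<subseteq> Monarch b n
       \<and> (n \<ge> 512 \<longrightarrow> (Butterfly n :: complex mat set) \<subset> Monarch b n)"
proof -
  obtain m where n: "n = 2^m" using assms by auto
  obtain c where c: "c \<le> m" "b = 2^c"
    using assms(5) divides_primepow_nat[of 2 b m] n by auto
  have c0: "0 < c" using c assms by (cases c) auto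
  have cm: "c < m" using c assms n by (metis le_neq_implies_less nat_less_le)
  have 1: "(Butterfly n :: real mat set) \<subseteq> Monarch b n" using butterfly_sub[OF n c0 cm] c by simp
  have 2: "(Butterfly n :: complex mat set) \<subseteq> Monarch b n" using butterfly_sub[OF n c0 cm] c by simp
  have 3: "n \<ge> 512 \<longrightarrow> (Butterfly n :: real mat set) \<subset> Monarch b n"
  proof
    assume "n \<ge> 512" then have "8 \<le> n" by simp
    then show "(Butterfly n :: real mat set) \<subset> Monarch b n" using strict[OF n c0 cm] c by simp
  qed
  have 4: "n \<ge> 512 \<longrightarrow> (Butterfly n :: complex mat set) \<subset> Monarch b n"
  proof
    assume "n \<ge> 512" then have "8 \<le> n" by simp
    then show "(Butterfly n :: complex mat set) \<subset> Monarch b n" using strict[OF n c0 cm] c by simp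
  qed
  show ?thesis using 1 2 3 4 by blast
qed

end
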